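(* Let $\delta\in\{1,-1\}$. Let $\alpha,\beta,\gamma\in\mathbb{Z}[i]$ satisfy $\alpha^2+(1+\delta i)\beta^2+\gamma^2=0$, $\alpha\beta\gamma\neq0$, $\gcd(\alpha,\beta)\in U$. Then, after multiplying $\alpha,\beta,\gamma$ by suitable units and possibly interchanging the first and third coordinates, one obtains $(X,Y,Z)$ with $X^2+(1+\delta i)Y^2=Z^2$, $X,Z\in O^I$, $Y=(1+i)^{2+a_1}p_2^{a_2}\cdots p_m^{a_m}$ (integers $a_j\ge0$, $p_j$ distinct Gaussian primes in $O^I$), $\gcd(X,Y)\in U$, $XYZ\ne0$. Conversely, if $(X,Y,Z)$ satisfies $X^2+(1+\delta i)Y^2=Z^2$, $\gcd(X,Y)\in U$, $XYZ\neq 0$, then $(X,Y,iZ)$ is a solution of $X^2+(1+\delta i)Y^2+Z^2=0$ with the same conditions.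
   Context: $\mathbb{Z}[i]$ is the ring of Gaussian integers, $U=\{1,-1,i,-i\}$ its unit group; $R(\alpha),I(\alpha)$ are real and imaginary parts. $\gcd(x,y)\in U$ means no common non-unit divisor. $O=\{\alpha: R(\alpha)+I(\alpha)\equiv1\pmod 2\}$, $O^I=\{\alpha\in O: R(\alpha)\equiv 1\pmod 4\}$. *)

theory Defs
  imports Complex_Main
begin

definition gint :: "complex set" where
  "gint = {z. Re z \<in> \<int> \<and> Im z \<in> \<int>}"

definition gdvd :: "complex \<Rightarrow> complex \<Rightarrow> bool" where
  "gdvd a b \<longleftrightarrow> (\<exists>c\<in>gint. b = a * c)"

definition gunits :: "complex set" where
  "gunits = {1, -1, \<i>, -\<i>}"

text \<open>gcd(x,y) in U: no common non-unit divisor in Z[i].\<close>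
definition gcoprime :: "complex \<Rightarrow> complex \<Rightarrow> bool" where
  "gcoprime x y \<longleftrightarrow> (\<forall>d\<in>gint. gdvd d x \<and> gdvd d y \<longrightarrow> d \<in> gunits)"

definition gprime :: "complex \<Rightarrow> bool" where
  "gprime p \<longleftrightarrow> p \<in> gint \<and> p \<noteq> 0 \<and> p \<notin> gunits \<and>
     (\<forall>a\<in>gint. \<forall>b\<in>gint. gdvd p (a * b) \<longrightarrow> gdvd p a \<or> gdvd p b)"

definition gO :: "complex set" where
  "gO = {z \<in> gint. odd (\<lfloor>Re z\<rfloor> + \<lfloor>Im z\<rfloor>)}"

definition gOI :: "complex set" where
  "gOI = {z \<in> gO. \<lfloor>Re z\<rfloor> mod 4 = 1}"

end

theory Submission
  imports Defs
begin

lemma gint_Complex[simp]: "Complex (of_int a) (of_int b) \<in> gint"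
  by (simp add: gint_def)

lemma gint_cases:
  assumes "z \<in> gint" obtains a b :: int where "z = Complex (of_int a) (of_int b)"
proof -
  from assms obtain a b where "Re z = of_int a" "Im z = of_int b"
    unfolding gint_def by (auto elim!: Ints_cases)
  then have "z = Complex (of_int a) (of_int b)" by (metis complex_surj)
  then show ?thesis using that by blast
qed

lemma gint_add[simp,intro]: "x \<in> gint \<Longrightarrow> y \<in> gint \<Longrightarrow> x + y \<in> gint"
  by (simp add: gint_def)
lemma gint_diff[simp,intro]: "x \<in> gint \<Longrightarrow> y \<in> gint \<Longrightarrow> x - y \<in> gint"
  by (simp add: gint_def)
lemma gint_minus[simp,intro]: "x \<in> gint \<Longrightarrow> - x \<in> gint"
  by (simp add: gint_def)
lemma gint_mult[simp,intro]: "x \<in> gint \<Longrightarrow> y \<in> gint \<Longrightarrow> x * y \<in> gint"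
  by (simp add: gint_def)
lemma gint_0[simp]: "0 \<in> gint" and gint_1[simp]: "1 \<in> gint" and gint_i[simp]: "\<i> \<in> gint"
  by (auto simp: gint_def)
lemma gint_of_int[simp]: "of_int n \<in> gint"
  by (simp add: gint_def)
lemma gint_numeral[simp]: "numeral n \<in> gint"
  by (simp add: gint_def)
lemma gint_power[simp,intro]: "x \<in> gint \<Longrightarrow> x ^ n \<in> gint"
  by (induction n) auto
lemma gint_prod[intro]: "(\<And>x. x \<in> A \<Longrightarrow> f x \<in> gint) \<Longrightarrow> prod f A \<in> gint"
  by (induction A rule: infinite_finite_induct) auto

lemma gunits_gint: "u \<in> gunits \<Longrightarrow> u \<in> gint"
  by (auto simp: gunits_def)
lemma gunits_nz: "u \<in> gunits \<Longrightarrow> u \<noteq> 0"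
  by (auto simp: gunits_def)
lemma gunits_mult: "u \<in> gunits \<Longrightarrow> v \<in> gunits \<Longrightarrow> u * v \<in> gunits"
  by (auto simp: gunits_def)
lemma gunits_inv: "u \<in> gunits \<Longrightarrow> \<exists>v\<in>gunits. u * v = 1"
  unfolding gunits_def by (auto intro: bexI[of _ "-\<i>"] bexI[of _ "\<i>"])
lemma gunits_minus: "u \<in> gunits \<Longrightarrow> - u \<in> gunits"
  by (auto simp: gunits_def)
lemma gunits_i: "u \<in> gunits \<Longrightarrow> \<i> * u \<in> gunits"
  by (auto simp: gunits_def)

definition gn :: "complex \<Rightarrow> nat" where
  "gn z = nat (\<lfloor>Re z\<rfloor>^2 + \<lfloor>Im z\<rfloor>^2)"

lemma gn_Complex[simp]: "gn (Complex (of_int a) (of_int b)) = nat (a^2 + b^2)"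
  by (simp add: gn_def)

lemma gn_real: assumes "z \<in> gint" shows "real (gn z) = (cmod z)^2"
proof -
  obtain a b where z: "z = Complex (of_int a) (of_int b)" using gint_cases assms by blast
  have "(0::int) \<le> a^2 + b^2" by simp
  then show ?thesis unfolding z cmod_power2 by (simp del: of_int_power add: of_int_power[symmetric])
qed

lemma gn_mult: assumes "x \<in> gint" "y \<in> gint" shows "gn (x * y) = gn x * gn y"
proof -
  have "real (gn (x*y)) = real (gn x * gn y)"
    using assms by (simp add: gn_real norm_mult power_mult_distrib)
  then show ?thesis by (simp only: of_nat_eq_iff)
qed

lemma gn_0_iff: assumes "z \<in> gint" shows "gn z = 0 \<longleftrightarrow> z = 0"
proof -
  have "real (gn z) = 0 \<longleftrightarrow> z = 0" using assms by (simp add: gn_real)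
  then show ?thesis by simp
qed

lemma gn_1_iff: assumes "z \<in> gint" shows "gn z = 1 \<longleftrightarrow> z \<in> gunits"
proof -
  obtain a b where z: "z = Complex (of_int a) (of_int b)" using gint_cases assms by blast
  have "nat (a^2+b^2) = 1 \<longleftrightarrow> (a,b) \<in> {(1,0),(-1,0),(0,1),(0,-1)}"
  proof
    assume h: "nat (a^2+b^2) = 1"
    then have h': "a^2 + b^2 = 1" by simp
    have "a^2 \<le> 1" "b^2 \<le> 1" using h' by (smt (verit) zero_le_power2)+
    then have "\<bar>a\<bar> \<le> 1" "\<bar>b\<bar> \<le> 1" by (simp_all add: abs_square_le_1)
    then have "a \<in> {-1,0,1}" "b \<in> {-1,0,1}" by auto
    then show "(a,b) \<in> {(1,0),(-1,0),(0,1),(0,-1)}" using h' by auto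
  qed auto
  moreover have "z \<in> gunits \<longleftrightarrow> (a,b) \<in> {(1,0),(-1,0),(0,1),(0,-1)}"
    unfolding z gunits_def by (auto simp: complex_eq_iff)
  ultimately show ?thesis using z by simp
qed

lemma gunits_gn: "u \<in> gunits \<Longrightarrow> gn u = 1"
  using gn_1_iff gunits_gint by blast

lemma gdvd_refl[simp]: "gdvd a a"
  unfolding gdvd_def by (auto intro: bexI[of _ 1])
lemma gdvd_0[simp]: "gdvd a 0"
  unfolding gdvd_def by (auto intro: bexI[of _ 0])
lemma gdvd_trans: "gdvd a b \<Longrightarrow> gdvd b c \<Longrightarrow> gdvd a c"
  unfolding gdvd_def by (metis gint_mult mult.assoc)
lemma gdvd_multR: "gdvd a b \<Longrightarrow> c \<in> gint \<Longrightarrow> gdvd a (b * c)"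
  unfolding gdvd_def by (metis gint_mult mult.assoc)
lemma gdvd_multL: "gdvd a b \<Longrightarrow> c \<in> gint \<Longrightarrow> gdvd a (c * b)"
  by (metis gdvd_multR mult.commute)
lemma gdvd_triv: "c \<in> gint \<Longrightarrow> gdvd a (a * c)"
  unfolding gdvd_def by blast
lemma gdvd_add: "gdvd a b \<Longrightarrow> gdvd a c \<Longrightarrow> gdvd a (b + c)"
  unfolding gdvd_def by (metis distrib_left gint_add)
lemma gdvd_diff: "gdvd a b \<Longrightarrow> gdvd a c \<Longrightarrow> gdvd a (b - c)"
  unfolding gdvd_def by (metis right_diff_distrib gint_diff)
lemma gdvd_minus: "gdvd a b \<Longrightarrow> gdvd a (- b)"
  using gdvd_diff[of a 0 b] by simp
lemma gdvd_gint: "gdvd a b \<Longrightarrow> a \<in> gint \<Longrightarrow> b \<in> gint"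
  unfolding gdvd_def by auto

lemma gdvd_unit_cancel: assumes "u \<in> gunits" "gdvd a (u * b)" shows "gdvd a b"
proof -
  obtain v where v: "v \<in> gunits" "u * v = 1" using gunits_inv assms(1) by blast
  have "gdvd a ((u*b) * v)" using gdvd_multR assms(2) v(1) gunits_gint by blast
  moreover have "(u*b)*v = b" using v(2) by (simp add: algebra_simps)
  ultimately show ?thesis by simp
qed

lemma gdvd_unit_left: assumes "u \<in> gunits" "gdvd a b" shows "gdvd (u * a) b"
proof -
  obtain v where v: "v \<in> gunits" "u * v = 1" using gunits_inv assms(1) by blast
  obtain c where c: "c \<in> gint" "b = a * c" using assms(2) gdvd_def by blast
  have "b = (u * a) * (v * c)" using c v(2) by (simp add: algebra_simps)
  then show ?thesis unfolding gdvd_def using c(1) v(1) gunits_gint by blast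
qed

lemma gdvd_unit: assumes "u \<in> gunits" "b \<in> gint" shows "gdvd u b"
proof -
  obtain v where v: "v \<in> gunits" "u * v = 1" using gunits_inv assms(1) by blast
  have "b = u * (v * b)" using v(2) by (simp add: mult.assoc[symmetric])
  then show ?thesis unfolding gdvd_def using v(1) gunits_gint assms(2) by blast
qed

lemma gn_1[simp]: "gn 1 = 1" by (simp add: gn_def)

lemma gdvd_gn_le: assumes "gdvd a b" "b \<noteq> 0" "a \<in> gint" shows "gn a \<le> gn b"
proof -
  obtain c where c: "c \<in> gint" "b = a * c" using assms(1) gdvd_def by blast
  then have "c \<noteq> 0" using assms(2) by auto
  then have "gn c \<ge> 1" using gn_0_iff c(1) by fastforce
  then show ?thesis using c gn_mult assms(3) by simp
qed

lemma gdvd_one_unit: assumes "gdvd a 1" "a \<in> gint" shows "a \<in> gunits"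
proof -
  obtain c where c: "c \<in> gint" "1 = a * c" using assms(1) gdvd_def by blast
  then have "gn a * gn c = 1" using gn_mult assms(2) by (metis gn_1)
  then show ?thesis using gn_1_iff assms(2) by simp
qed

lemma gdiv: assumes "a \<in> gint" "b \<in> gint" "b \<noteq> 0"
  shows "\<exists>q\<in>gint. gn (a - q * b) < gn b"
proof -
  define z where "z = a / b"
  define q where "q = Complex (of_int (round (Re z))) (of_int (round (Im z)))"
  have q: "q \<in> gint" by (simp add: q_def)
  have eq: "a - q * b = (z - q) * b" using assms(3) by (simp add: z_def algebra_simps)
  have r1: "\<bar>Re z - of_int (round (Re z))\<bar> \<le> 1/2"
    using of_int_round_ge[of "Re z"] of_int_round_le[of "Re z"] by linarith
  have r2: "\<bar>Im z - of_int (round (Im z))\<bar> \<le> 1/2"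
    using of_int_round_ge[of "Im z"] of_int_round_le[of "Im z"] by linarith
  have sq: "x^2 \<le> 1/4" if "\<bar>x\<bar> \<le> 1/2" for x :: real
  proof -
    have "\<bar>x\<bar> * \<bar>x\<bar> \<le> 1/2 * (1/2)" using that by (intro mult_mono) auto
    then show ?thesis by (simp add: power2_eq_square)
  qed
  have "Re (z - q) = Re z - of_int (round (Re z))" "Im (z - q) = Im z - of_int (round (Im z))"
    by (simp_all add: q_def)
  then have nz: "(cmod (z - q))^2 \<le> 1/2"
    unfolding cmod_power2 using sq[OF r1] sq[OF r2] by simp
  have pos: "(cmod b)^2 > 0" using assms(3) by simp
  have "real (gn (a - q*b)) = (cmod (z-q))^2 * (cmod b)^2"
  proof -
    have "a - q*b \<in> gint" using q assms by auto
    then have "real (gn (a - q*b)) = (cmod (a - q*b))^2" by (rule gn_real)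
    then show ?thesis by (simp only: eq norm_mult power_mult_distrib)
  qed
  also have "\<dots> \<le> 1/2 * (cmod b)^2" using nz pos by (simp add: mult_right_mono)
  also have "\<dots> < (cmod b)^2" using pos by simp
  also have "\<dots> = real (gn b)" using gn_real assms(2) by simp
  finally show ?thesis using q by auto
qed

lemma irred_prime:
  assumes p: "p \<in> gint" "p \<noteq> 0" "p \<notin> gunits"
    and irr: "\<And>d. d \<in> gint \<Longrightarrow> gdvd d p \<Longrightarrow> d \<in> gunits \<or> gdvd p d"
  shows "gprime p"
  unfolding gprime_def
proof (intro conjI ballI impI p)
  fix a b assume ab: "a \<in> gint" "b \<in> gint" "gdvd p (a * b)"
  show "gdvd p a \<or> gdvd p b"
  proof (cases "gdvd p a")
    case True then show ?thesis by blast
  next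
    case False
    note na = False
    define S where "S x \<longleftrightarrow> x \<in> gint \<and> x \<noteq> 0 \<and> (\<exists>s t. s \<in> gint \<and> t \<in> gint \<and> x = s*a + t*p)" for x
    have "\<exists>s t. s \<in> gint \<and> t \<in> gint \<and> p = s*a + t*p"
      by (rule exI[of _ 0], rule exI[of _ 1]) simp
    then have "S p" unfolding S_def using p by simp
    then obtain g where g: "S g" "\<And>y. S y \<Longrightarrow> gn g \<le> gn y"
      using ex_has_least_nat[of S p gn] by blast
    obtain s0 t0 where st0: "s0 \<in> gint" "t0 \<in> gint" "g = s0*a + t0*p" "g \<in> gint" "g \<noteq> 0"
      using g(1) unfolding S_def by blast
    have dv: "gdvd g y" if "s \<in> gint" "t \<in> gint" "y = s*a + t*p" for y s t
    proof -
      have y: "y \<in> gint" using that ab p by auto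
      obtain q where q: "q \<in> gint" "gn (y - q*g) < gn g" using gdiv[OF y st0(4,5)] by blast
      have r: "y - q*g = (s - q*s0)*a + (t - q*t0)*p" using that st0(3) by (simp add: algebra_simps)
      have "y - q*g = 0"
      proof (rule ccontr)
        assume "y - q*g \<noteq> 0"
        moreover have "\<exists>s' t'. s' \<in> gint \<and> t' \<in> gint \<and> y - q*g = s'*a + t'*p"
          by (rule exI[of _ "s - q*s0"], rule exI[of _ "t - q*t0"]) (use r q(1) that(1,2) st0(1,2) in auto)
        moreover have "y - q*g \<in> gint" using y q(1) st0(4) by auto
        ultimately have "S (y - q*g)" unfolding S_def by simp
        from g(2)[OF this] show False using q(2) by simp
      qed
      then have "y = g * q" by (simp add: algebra_simps)
      then show ?thesis unfolding gdvd_def using q(1) by blast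
    qed
    have ga: "gdvd g a" using dv[of 1 0 a] by simp
    have gp: "gdvd g p" using dv[of 0 1 p] by simp
    have "g \<in> gunits"
    proof (rule ccontr)
      assume "g \<notin> gunits"
      then have "gdvd p g" using irr[OF st0(4) gp] by blast
      then show False using na ga gdvd_trans by blast
    qed
    have "gdvd p (s0 * (a*b) + (p * (t0*b)))"
    proof (rule gdvd_add)
      show "gdvd p (s0 * (a*b))" by (rule gdvd_multL[OF ab(3) st0(1)])
      show "gdvd p (p * (t0*b))" by (rule gdvd_triv) (use ab st0 in auto)
    qed
    moreover have "s0 * (a*b) + (p * (t0*b)) = g * b" using st0(3) by (simp add: algebra_simps)
    ultimately show ?thesis using gdvd_unit_cancel[OF \<open>g \<in> gunits\<close>] by simp
  qed
qed

lemma exists_prime_dvd: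
  assumes z: "z \<in> gint" "z \<noteq> 0" "z \<notin> gunits"
  shows "\<exists>p. gprime p \<and> gdvd p z"
proof -
  define T where "T d \<longleftrightarrow> d \<in> gint \<and> d \<notin> gunits \<and> gdvd d z" for d
  have "T z" using z by (simp add: T_def)
  then obtain d where d: "T d" "\<And>y. T y \<Longrightarrow> gn d \<le> gn y"
    using ex_has_least_nat[of T z gn] by blast
  have d1: "d \<in> gint" "d \<notin> gunits" "gdvd d z" using d(1) T_def by auto
  have d0: "d \<noteq> 0" using d1(3) z(2) unfolding gdvd_def by auto
  have "gprime d"
  proof (rule irred_prime[OF d1(1) d0 d1(2)])
    fix e assume e: "e \<in> gint" "gdvd e d"
    show "e \<in> gunits \<or> gdvd d e"
    proof (cases "e \<in> gunits")
      case True then show ?thesis by blast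
    next
      case False
      note ne = False
      then have "T e" using e d1 gdvd_trans T_def by blast
      then have le: "gn d \<le> gn e" using d(2) by blast
      obtain c where c: "c \<in> gint" "d = e * c" using e(2) gdvd_def by blast
      have gd: "gn d = gn e * gn c" using c gn_mult e(1) by simp
      have "gn d > 0" using d0 gn_0_iff d1(1) by auto
      then have ge0: "gn e > 0" using gd by simp
      have "gn c \<le> 1"
      proof (rule ccontr)
        assume "\<not> gn c \<le> 1"
        then have "gn e * 2 \<le> gn e * gn c" by (intro mult_le_mono2) simp
        then show False using le gd ge0 by linarith
      qed
      moreover have "c \<noteq> 0" using c d0 by auto
      then have "gn c \<noteq> 0" using gn_0_iff c(1) by auto
      ultimately have "gn c = 1" by simp
      then have cu: "c \<in> gunits" using gn_1_iff c(1) by auto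
      obtain v where v: "v \<in> gunits" "c * v = 1" using gunits_inv cu by blast
      have "e = d * v" using c(2) v(2) by (simp add: mult.assoc)
      then show ?thesis unfolding gdvd_def using v(1) gunits_gint by blast
    qed
  qed
  then show ?thesis using d1(3) by blast
qed

lemma gprime_gint: "gprime p \<Longrightarrow> p \<in> gint" by (simp add: gprime_def)

lemma gprime_unit_mult:
  assumes "gprime p" "u \<in> gunits" shows "gprime (u * p)"
proof -
  have p: "p \<in> gint" "p \<noteq> 0" "p \<notin> gunits" using assms(1) gprime_def by auto
  have up: "u * p \<in> gint" using p(1) assms(2) gunits_gint by auto
  have "gn (u*p) = gn p" using gn_mult[OF gunits_gint[OF assms(2)] p(1)] gunits_gn[OF assms(2)] by simp
  then have "u * p \<notin> gunits" using p(1,3) gn_1_iff[OF p(1)] gunits_gn by force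
  moreover have "u * p \<noteq> 0" using p(2) gunits_nz[OF assms(2)] by auto
  moreover have "gdvd (u*p) a \<or> gdvd (u*p) b" if "a \<in> gint" "b \<in> gint" "gdvd (u*p) (a*b)" for a b
  proof -
    have "gdvd p (u*p)" using gdvd_triv[of u p] gunits_gint[OF assms(2)] by (simp add: mult.commute)
    then have "gdvd p (a*b)" using that(3) gdvd_trans by blast
    then have "gdvd p a \<or> gdvd p b" using assms(1) that unfolding gprime_def by blast
    then show ?thesis using gdvd_unit_left[OF assms(2)] by blast
  qed
  ultimately show ?thesis unfolding gprime_def using up by blast
qed

lemma gO_Complex[simp]: "Complex (of_int a) (of_int b) \<in> gO \<longleftrightarrow> odd (a + b)"
  by (simp add: gO_def)
lemma gOI_Complex[simp]: "Complex (of_int a) (of_int b) \<in> gOI \<longleftrightarrow> a mod 4 = 1 \<and> even b"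
  by (simp add: gOI_def) presburger

lemma gO_gint: "z \<in> gO \<Longrightarrow> z \<in> gint" by (simp add: gO_def)
lemma gOI_gO: "z \<in> gOI \<Longrightarrow> z \<in> gO" by (simp add: gOI_def)
lemma gOI_gint: "z \<in> gOI \<Longrightarrow> z \<in> gint" by (simp add: gOI_def gO_def)
lemma gOI_1: "1 \<in> gOI"
  by (simp add: gOI_def gO_def gint_def)

lemma mult_Complex: "Complex a b * Complex c d = Complex (a*c - b*d) (a*d + b*c)"
  by (simp add: complex_eq_iff)

lemma dvd_1i_Complex:
  "gdvd (1 + \<i>) (Complex (of_int a) (of_int b)) \<longleftrightarrow> even (a + b)"
proof
  assume "gdvd (1 + \<i>) (Complex (of_int a) (of_int b))"
  then obtain c where c: "c \<in> gint" "Complex (of_int a) (of_int b) = (1 + \<i>) * c"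
    unfolding gdvd_def by blast
  obtain x y where xy: "c = Complex (of_int x) (of_int y)" using gint_cases c(1) by blast
  have "(1 + \<i>) * c = Complex (of_int (x - y)) (of_int (x + y))"
    unfolding xy by (simp add: complex_eq_iff)
  then have "a = x - y" "b = x + y" using c(2) by (simp_all add: complex_eq_iff)
  then show "even (a + b)" by simp
next
  assume "even (a + b)"
  then obtain k where k: "a + b = 2 * k" by blast
  have "Complex (of_int a) (of_int b) = (1 + \<i>) * Complex (of_int k) (of_int (k - a))"
    using k by (simp add: complex_eq_iff)
  then show "gdvd (1 + \<i>) (Complex (of_int a) (of_int b))" unfolding gdvd_def using gint_Complex by blast
qed

lemma gO_iff: "z \<in> gint \<Longrightarrow> z \<in> gO \<longleftrightarrow> \<not> gdvd (1 + \<i>) z"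
  by (elim gint_cases) (simp add: dvd_1i_Complex)

lemma gO_unit_OI: assumes "z \<in> gO" shows "\<exists>u\<in>gunits. u * z \<in> gOI"
proof -
  obtain a b where z: "z = Complex (of_int a) (of_int b)" using gint_cases gO_gint assms by blast
  have ab: "odd (a + b)" using assms z by simp
  have e1: "1 * z = Complex (of_int a) (of_int b)" using z by simp
  have e2: "(-1) * z = Complex (of_int (-a)) (of_int (-b))" using z by (simp add: complex_eq_iff)
  have e3: "\<i> * z = Complex (of_int (-b)) (of_int a)" using z by (simp add: complex_eq_iff)
  have e4: "(-\<i>) * z = Complex (of_int b) (of_int (-a))" using z by (simp add: complex_eq_iff)
  have "a mod 4 = 1 \<and> even b \<or> (-a) mod 4 = 1 \<and> even (-b) \<or> (-b) mod 4 = 1 \<and> even a \<or> b mod 4 = 1 \<and> even (-a)"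
    using ab by presburger
  then show ?thesis
  proof (elim disjE)
    assume h: "a mod 4 = 1 \<and> even b"
    have "1 * z \<in> gOI" using z h by simp
    then show ?thesis by (auto simp: gunits_def)
  next
    assume h: "(-a) mod 4 = 1 \<and> even (-b)"
    have "(-1) * z \<in> gOI" using e2 h by (simp only: gOI_Complex)
    then show ?thesis unfolding gunits_def by blast
  next
    assume h: "(-b) mod 4 = 1 \<and> even a"
    have "\<i> * z \<in> gOI" using e3 h by (simp only: gOI_Complex)
    then show ?thesis unfolding gunits_def by blast
  next
    assume h: "b mod 4 = 1 \<and> even (-a)"
    have "(-\<i>) * z \<in> gOI" using e4 h by (simp only: gOI_Complex)
    then show ?thesis unfolding gunits_def by blast
  qed
qed

lemma gOI_unit_unique: assumes "z \<in> gOI" "u \<in> gunits" "u * z \<in> gOI" shows "u = 1"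
proof -
  obtain a b where z: "z = Complex (of_int a) (of_int b)" using gint_cases gOI_gint assms by blast
  have ab: "a mod 4 = 1" "even b" using assms(1) z by auto
  have e2: "(-1) * z = Complex (of_int (-a)) (of_int (-b))" using z by (simp add: complex_eq_iff)
  have e3: "\<i> * z = Complex (of_int (-b)) (of_int a)" using z by (simp add: complex_eq_iff)
  have e4: "(-\<i>) * z = Complex (of_int b) (of_int (-a))" using z by (simp add: complex_eq_iff)
  have "\<not> ((-a) mod 4 = 1)" "\<not> ((-b) mod 4 = 1)" "\<not> (b mod 4 = 1)" using ab by presburger+
  then have "(-1) * z \<notin> gOI" "\<i> * z \<notin> gOI" "(-\<i>) * z \<notin> gOI"
    by (simp_all only: e2 e3 e4 gOI_Complex) simp_all
  moreover have "u = 1 \<or> u = -1 \<or> u = \<i> \<or> u = -\<i>" using assms(2) by (simp add: gunits_def)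
  ultimately show ?thesis using assms(3) by auto
qed

lemma gOI_mult: assumes "z \<in> gOI" "w \<in> gOI" shows "z * w \<in> gOI"
proof -
  obtain a b where z: "z = Complex (of_int a) (of_int b)" using gint_cases gOI_gint assms by blast
  obtain c d where w: "w = Complex (of_int c) (of_int d)" using gint_cases gOI_gint assms by blast
  have h: "a mod 4 = 1" "even b" "c mod 4 = 1" "even d" using assms z w by auto
  have "a = 4*(a div 4) + 1" using h(1) mult_div_mod_eq[of 4 a] by simp
  then obtain k where k: "a = 4*k + 1" by blast
  have "c = 4*(c div 4) + 1" using h(3) mult_div_mod_eq[of 4 c] by simp
  then obtain m where m: "c = 4*m + 1" by blast
  obtain n where n: "b = 2*n" using h(2) by blast
  obtain l where l: "d = 2*l" using h(4) by blast
  have e1: "a*c - b*d = 4*(4*k*m + k + m - n*l) + 1" using k m n l by (simp add: algebra_simps)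
  have e2: "a*d + b*c = 2*(a*l + n*c)" using n l by (simp add: algebra_simps)
  have m4: "(4*T + 1) mod 4 = (1::int)" for T by presburger
  have "(a*c - b*d) mod 4 = 1" unfolding e1 by (rule m4)
  moreover have "even (a*d + b*c)" unfolding e2 by simp
  moreover have "z * w = Complex (of_int (a*c - b*d)) (of_int (a*d + b*c))"
    using z w by (simp add: complex_eq_iff)
  ultimately show ?thesis by (simp only: gOI_Complex)
qed

lemma gOI_nz: "z \<in> gOI \<Longrightarrow> z \<noteq> 0"
  by (auto simp: gOI_def gO_def)

lemma one_i_gint[simp]: "1 + \<i> \<in> gint" by simp
lemma gn_1i: "gn (1 + \<i>) = 2"
  by (simp add: gn_def)

lemma factor_OI:
  assumes "w \<in> gOI"
  shows "\<exists>P e. finite P \<and> P \<subseteq> {p. gprime p \<and> p \<in> gOI} \<and> w = (\<Prod>p\<in>P. p ^ e p)"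
  using assms
proof (induction "gn w" arbitrary: w rule: less_induct)
  case less
  have wg: "w \<in> gint" "w \<noteq> 0" using less.prems gOI_gint gOI_nz by auto
  show ?case
  proof (cases "w \<in> gunits")
    case True
    have "w * 1 \<in> gOI" using less.prems by simp
    then have "w = 1" using gOI_unit_unique[OF gOI_1 True] by simp
    then show ?thesis by (intro exI[of _ "{}"]) auto
  next
    case False
    obtain p where p: "gprime p" "gdvd p w" using exists_prime_dvd[OF wg False] by blast
    have pg: "p \<in> gint" using p(1) gprime_gint by blast
    have "p \<in> gO"
    proof (rule ccontr)
      assume "p \<notin> gO"
      then have "gdvd (1+\<i>) p" using gO_iff[OF pg] by simp
      then have "gdvd (1+\<i>) w" using p(2) gdvd_trans by blast
      then show False using gO_iff[OF wg(1)] gOI_gO[OF less.prems] by simp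
    qed
    then obtain u where u: "u \<in> gunits" "u * p \<in> gOI" using gO_unit_OI by blast
    define p' where "p' = u * p"
    have p': "gprime p'" "p' \<in> gOI" "gdvd p' w"
      using gprime_unit_mult[OF p(1) u(1)] u(2) gdvd_unit_left[OF u(1) p(2)] by (auto simp: p'_def)
    obtain c where c: "c \<in> gint" "w = p' * c" using p'(3) gdvd_def by blast
    have "c \<in> gO"
    proof (rule ccontr)
      assume "c \<notin> gO"
      then have "gdvd (1+\<i>) c" using gO_iff[OF c(1)] by simp
      then have "gdvd (1+\<i>) w" using c(2) gdvd_multL gprime_gint[OF p'(1)] by simp
      then show False using gO_iff[OF wg(1)] gOI_gO[OF less.prems] by simp
    qed
    then obtain u' where u': "u' \<in> gunits" "u' * c \<in> gOI" using gO_unit_OI by blast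
    have "w * u' \<in> gOI" using gOI_mult[OF p'(2) u'(2)] c(2) by (simp add: algebra_simps)
    then have "u' * w \<in> gOI" by (simp add: mult.commute)
    then have "u' = 1" using gOI_unit_unique[OF less.prems u'(1)] by simp
    then have cOI: "c \<in> gOI" using u'(2) by simp
    have pg': "p' \<in> gint" using p'(1) gprime_gint by blast
    have "gn p' \<noteq> 0" "gn p' \<noteq> 1"
      using p'(1) gn_0_iff[OF pg'] gn_1_iff[OF pg'] unfolding gprime_def by auto
    moreover have "gn c \<noteq> 0" using gn_0_iff[OF c(1)] gOI_nz[OF cOI] by simp
    moreover have "gn w = gn p' * gn c" using c(2) gn_mult[OF pg' c(1)] by simp
    ultimately have "gn c < gn w"
      using mult_le_mono1[of 2 "gn p'" "gn c"] by simp
    from less.hyps[OF this cOI] obtain P' e' where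
      P': "finite P'" "P' \<subseteq> {p. gprime p \<and> p \<in> gOI}" "c = (\<Prod>p\<in>P'. p ^ e' p)" by blast
    show ?thesis
    proof (cases "p' \<in> P'")
      case True
      define e where "e = e'(p' := Suc (e' p'))"
      have "(\<Prod>q\<in>P'. q ^ e q) = p' ^ e p' * (\<Prod>q\<in>P' - {p'}. q ^ e q)"
        using prod.remove[OF P'(1) True] by blast
      also have "(\<Prod>q\<in>P' - {p'}. q ^ e q) = (\<Prod>q\<in>P' - {p'}. q ^ e' q)"
        by (rule prod.cong) (auto simp: e_def)
      also have "p' ^ e p' = p' * p' ^ e' p'" by (simp add: e_def)
      finally have "(\<Prod>q\<in>P'. q ^ e q) = p' * (p' ^ e' p' * (\<Prod>q\<in>P' - {p'}. q ^ e' q))"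
        by (simp add: mult.assoc)
      also have "p' ^ e' p' * (\<Prod>q\<in>P' - {p'}. q ^ e' q) = c"
        using P'(3) prod.remove[OF P'(1) True, of "\<lambda>q. q ^ e' q"] by simp
      finally have "w = (\<Prod>q\<in>P'. q ^ e q)" using c(2) by simp
      then show ?thesis using P' by blast
    next
      case False
      define e where "e = e'(p' := 1)"
      have "(\<Prod>q\<in>insert p' P'. q ^ e q) = p' ^ e p' * (\<Prod>q\<in>P'. q ^ e q)"
        using prod.insert[OF P'(1) False] by blast
      also have "(\<Prod>q\<in>P'. q ^ e q) = (\<Prod>q\<in>P'. q ^ e' q)"
        by (rule prod.cong) (use False in \<open>auto simp: e_def\<close>)
      finally have "w = (\<Prod>q\<in>insert p' P'. q ^ e q)" using c(2) P'(3) by (simp add: e_def)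
      moreover have "insert p' P' \<subseteq> {p. gprime p \<and> p \<in> gOI}" using P'(2) p' by auto
      ultimately show ?thesis using P'(1) by blast
    qed
  qed
qed

lemma strip_1i:
  assumes "z \<in> gint" "z \<noteq> 0"
  shows "\<exists>k w u. w \<in> gOI \<and> u \<in> gunits \<and> z = u * (1 + \<i>) ^ k * w"
  using assms
proof (induction "gn z" arbitrary: z rule: less_induct)
  case less
  show ?case
  proof (cases "z \<in> gO")
    case True
    then obtain u where u: "u \<in> gunits" "u * z \<in> gOI" using gO_unit_OI by blast
    obtain v where v: "v \<in> gunits" "u * v = 1" using gunits_inv u(1) by blast
    have "z = v * (1 + \<i>) ^ 0 * (u * z)" using v(2) by (simp add: algebra_simps)
    then show ?thesis using u v by blast
  next
    case False
    then have "gdvd (1 + \<i>) z" using gO_iff[OF less.prems(1)] by simp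
    then obtain c where c: "c \<in> gint" "z = (1 + \<i>) * c" using gdvd_def by blast
    have c0: "c \<noteq> 0" using c less.prems by auto
    have "gn z = 2 * gn c" using c gn_mult gn_1i by simp
    moreover have "gn c \<noteq> 0" using gn_0_iff[OF c(1)] c0 by simp
    ultimately have "gn c < gn z" by simp
    from less.hyps[OF this c(1) c0] obtain k w u where
      kw: "w \<in> gOI" "u \<in> gunits" "c = u * (1 + \<i>) ^ k * w" by blast
    have "z = u * (1 + \<i>) ^ Suc k * w" using c(2) kw(3) by (simp add: algebra_simps)
    then show ?thesis using kw by blast
  qed
qed

lemma sqm4: "(x::int)^2 mod 4 = (if even x then 0 else 1)"
proof (cases "even x")
  case True
  then obtain k where "x = 2*k" by blast
  then have "x^2 = 4*(k*k)" by (simp add: power2_eq_square)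
  then show ?thesis using True by simp
next
  case False
  then obtain k where "x = 2*k + 1" using oddE by blast
  then have x2: "x^2 = 4*(k*k + k) + 1" by (simp add: power2_eq_square algebra_simps)
  have m4: "(4*T + 1) mod 4 = (1::int)" for T by presburger
  have "x^2 mod 4 = 1" unfolding x2 by (rule m4)
  then show ?thesis using False by simp
qed

lemma parity:
  fixes a b c d e f \<delta> :: int
  assumes \<delta>: "\<delta> = 1 \<or> \<delta> = -1"
    and R: "a^2 - b^2 + (c^2 - d^2) - 2*\<delta>*c*d + (e^2 - f^2) = 0"
    and I: "2*a*b + \<delta>*(c^2 - d^2) + 2*c*d + 2*e*f = 0"
    and cop: "\<not> (even (a+b) \<and> even (c+d))"
  shows "even c \<and> even d \<and> ((odd a \<and> even b \<and> even e \<and> odd f) \<or> (even a \<and> odd b \<and> odd e \<and> even f))"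
proof -
  have od: "odd \<delta>" using \<delta> by auto
  have "\<delta>*(c^2 - d^2) = 2 * (-(a*b + c*d + e*f))" using I by (simp add: algebra_simps)
  then have "even (\<delta>*(c^2 - d^2))" by simp
  then have "even (c^2 - d^2)" using od by simp
  then have cd: "even (c + d)" by simp
  then have ab: "odd (a + b)" using cop by simp
  have cde: "even c \<and> even d"
  proof (rule ccontr)
    assume "\<not> (even c \<and> even d)"
    then have "odd c" "odd d" using cd by auto
    then obtain x y where xy: "c = 2*x+1" "d = 2*y+1" by (metis oddE)
    have cw: "c^2 - d^2 = 2*(2*(x*x + x - y*y - y))" using xy by (simp add: power2_eq_square algebra_simps)
    have h: "2*(a*b+c*d+e*f) = -(\<delta>*(c^2-d^2))" using I by algebra
    have "2*(a*b + c*d + e*f) = 2*(2*(-\<delta>*(x*x + x - y*y - y)))" unfolding h cw by algebra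
    then have "a*b + c*d + e*f = 2*(-\<delta>*(x*x + x - y*y - y))" by simp
    then have "even (a*b + c*d + e*f)" by simp
    moreover have "even (a*b)" using ab by auto
    ultimately have "odd (e*f)" using \<open>odd c\<close> \<open>odd d\<close> by auto
    then have "odd e" "odd f" by auto
    have "odd (a^2 - b^2 + (c^2 - d^2) - 2*\<delta>*c*d + (e^2 - f^2))"
      using ab \<open>odd c\<close> \<open>odd d\<close> \<open>odd e\<close> \<open>odd f\<close> by simp
    then show False using R by simp
  qed
  then obtain x y where xy: "c = 2*x" "d = 2*y" by blast
  have K: "a^2 - b^2 + e^2 - f^2 = 4*(-(x*x - y*y - 2*\<delta>*x*y))"
    using R xy by (simp add: power2_eq_square algebra_simps)
  have m: "a^2 mod 4 = (if even a then 0 else 1)" "b^2 mod 4 = (if even b then 0 else 1)"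
          "e^2 mod 4 = (if even e then 0 else 1)" "f^2 mod 4 = (if even f then 0 else 1)"
    by (rule sqm4)+
  have aux: "\<And>A B E F K :: int. A - B + E - F = 4*K \<Longrightarrow> A mod 4 = 1 \<Longrightarrow> B mod 4 = 0 \<Longrightarrow>
      E mod 4 = 0 \<or> E mod 4 = 1 \<Longrightarrow> F mod 4 = 0 \<or> F mod 4 = 1 \<Longrightarrow> E mod 4 = 0 \<and> F mod 4 = 1"
    by presburger
  have aux2: "\<And>A B E F K :: int. A - B + E - F = 4*K \<Longrightarrow> A mod 4 = 0 \<Longrightarrow> B mod 4 = 1 \<Longrightarrow>
      E mod 4 = 0 \<or> E mod 4 = 1 \<Longrightarrow> F mod 4 = 0 \<or> F mod 4 = 1 \<Longrightarrow> E mod 4 = 1 \<and> F mod 4 = 0"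
    by presburger
  have ef: "e^2 mod 4 = 0 \<or> e^2 mod 4 = 1" "f^2 mod 4 = 0 \<or> f^2 mod 4 = 1" using m by auto
  show ?thesis
  proof (cases "odd a")
    case True
    then have "even b" using ab by simp
    then have "e^2 mod 4 = 0 \<and> f^2 mod 4 = 1" using aux[OF K _ _ ef] m True by simp
    then have "even e" "odd f" using m by (auto split: if_splits)
    then show ?thesis using cde True \<open>even b\<close> by simp
  next
    case False
    then have "odd b" using ab by simp
    then have "e^2 mod 4 = 1 \<and> f^2 mod 4 = 0" using aux2[OF K _ _ ef] m False by simp
    then have "odd e" "even f" using m by (auto split: if_splits)
    then show ?thesis using cde False \<open>odd b\<close> by simp
  qed
qed

definition RC :: "complex \<Rightarrow> bool" where
  "RC z \<longleftrightarrow> (\<exists>a b. z = Complex (of_int a) (of_int b) \<and> odd a \<and> even b)"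
definition IC :: "complex \<Rightarrow> bool" where
  "IC z \<longleftrightarrow> (\<exists>a b. z = Complex (of_int a) (of_int b) \<and> even a \<and> odd b)"

lemma RC_minus: "RC z \<Longrightarrow> RC (-z)"
proof -
  assume "RC z"
  then obtain a b where h: "z = Complex (of_int a) (of_int b)" "odd a" "even b" unfolding RC_def by blast
  have "-z = Complex (of_int (-a)) (of_int (-b))" using h(1) by (simp add: complex_eq_iff)
  moreover have "odd (-a)" "even (-b)" using h by simp_all
  ultimately show ?thesis unfolding RC_def by blast
qed
lemma IC_minus: "IC z \<Longrightarrow> IC (-z)"
proof -
  assume "IC z"
  then obtain a b where h: "z = Complex (of_int a) (of_int b)" "even a" "odd b" unfolding IC_def by blast
  have "-z = Complex (of_int (-a)) (of_int (-b))" using h(1) by (simp add: complex_eq_iff)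
  moreover have "even (-a)" "odd (-b)" using h by simp_all
  ultimately show ?thesis unfolding IC_def by blast
qed
lemma RC_i: "RC z \<Longrightarrow> IC (\<i> * z)"
proof -
  assume "RC z"
  then obtain a b where h: "z = Complex (of_int a) (of_int b)" "odd a" "even b" unfolding RC_def by blast
  have "\<i> * z = Complex (of_int (-b)) (of_int a)" using h(1) by (simp add: complex_eq_iff)
  then show ?thesis unfolding IC_def using h by fastforce
qed
lemma IC_i: "IC z \<Longrightarrow> RC (\<i> * z)"
proof -
  assume "IC z"
  then obtain a b where h: "z = Complex (of_int a) (of_int b)" "even a" "odd b" unfolding IC_def by blast
  have "\<i> * z = Complex (of_int (-b)) (of_int a)" using h(1) by (simp add: complex_eq_iff)
  then show ?thesis unfolding RC_def using h by fastforce
qed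

lemma unit_class:
  assumes "u \<in> gunits" "RC z" "IC w"
  shows "(RC (u*z) \<and> IC (u*w)) \<or> (IC (u*z) \<and> RC (u*w))"
proof -
  have "u = 1 \<or> u = -1 \<or> u = \<i> \<or> u = -\<i>" using assms(1) by (simp add: gunits_def)
  then show ?thesis
    using assms(2,3) RC_minus IC_minus RC_i IC_i by (elim disjE) auto
qed

lemma RC_OI: assumes "RC z" shows "z \<in> gOI \<or> -z \<in> gOI"
proof -
  obtain a b where h: "z = Complex (of_int a) (of_int b)" "odd a" "even b" using assms RC_def by blast
  have "-z = Complex (of_int (-a)) (of_int (-b))" using h(1) by (simp add: complex_eq_iff)
  moreover have "a mod 4 = 1 \<or> (-a) mod 4 = 1" using h(2) by presburger
  moreover have "z \<in> gOI" if "a mod 4 = 1" unfolding h(1) by (simp only: gOI_Complex) (use that h(3) in simp)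
  moreover have "Complex (of_int (-a)) (of_int (-b)) \<in> gOI" if "(-a) mod 4 = 1"
    by (simp only: gOI_Complex) (use that h(3) in simp)
  ultimately show ?thesis by metis
qed

lemma pick_R:
  assumes "v \<in> gunits" "RC (v * z)"
  shows "\<exists>u\<in>gunits. u * z \<in> gOI \<and> u^2 = v^2"
proof -
  from RC_OI[OF assms(2)] show ?thesis
  proof
    assume "v * z \<in> gOI" then show ?thesis using assms(1) by blast
  next
    assume "- (v * z) \<in> gOI"
    then have "(-v) * z \<in> gOI" by simp
    then show ?thesis using gunits_minus[OF assms(1)] by (intro bexI[of _ "-v"]) auto
  qed
qed

lemma pick_I:
  assumes "v \<in> gunits" "IC (v * z)"
  shows "\<exists>u\<in>gunits. u * z \<in> gOI \<and> u^2 = -(v^2)"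
proof -
  have "RC ((\<i>*v) * z)" using IC_i[OF assms(2)] by (simp add: mult.assoc)
  from pick_R[OF gunits_i[OF assms(1)] this] obtain u where
    "u \<in> gunits" "u * z \<in> gOI" "u^2 = (\<i>*v)^2" by blast
  moreover have "(\<i>*v)^2 = -(v^2)" by (simp add: power_mult_distrib)
  ultimately show ?thesis by auto
qed

lemma gcoprime_units:
  assumes "gcoprime x y" "u \<in> gunits" "v \<in> gunits"
  shows "gcoprime (u*x) (v*y)"
  unfolding gcoprime_def
proof (intro ballI impI)
  fix d assume "d \<in> gint" "gdvd d (u*x) \<and> gdvd d (v*y)"
  then have "gdvd d x" "gdvd d y" using gdvd_unit_cancel assms(2,3) by blast+
  then show "d \<in> gunits" using assms(1) \<open>d \<in> gint\<close> unfolding gcoprime_def by blast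
qed

lemma gcoprime_swap:
  assumes g: "\<alpha> \<in> gint" "\<beta> \<in> gint" "\<gamma> \<in> gint" "\<beta> \<noteq> 0" "k \<in> gint"
    and eq: "\<alpha>^2 + k * \<beta>^2 + \<gamma>^2 = 0" and cop: "gcoprime \<alpha> \<beta>"
  shows "gcoprime \<gamma> \<beta>"
  unfolding gcoprime_def
proof (intro ballI impI)
  fix d assume d: "d \<in> gint" "gdvd d \<gamma> \<and> gdvd d \<beta>"
  show "d \<in> gunits"
  proof (rule ccontr)
    assume nu: "d \<notin> gunits"
    have "d \<noteq> 0" using d(2) g(4) unfolding gdvd_def by auto
    then obtain p where p: "gprime p" "gdvd p d" using exists_prime_dvd[OF d(1) _ nu] by blast
    have pg: "gdvd p \<gamma>" "gdvd p \<beta>" using p(2) d(2) gdvd_trans by blast+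
    have "gdvd p (- (\<gamma>*\<gamma>) - (k*\<beta>)*\<beta>)"
      by (intro gdvd_diff gdvd_minus gdvd_multR gdvd_multL pg) (use g in auto)
    moreover have "- (\<gamma>*\<gamma>) - (k*\<beta>)*\<beta> = \<alpha>*\<alpha>"
      using eq unfolding power2_eq_square by algebra
    ultimately have "gdvd p (\<alpha>*\<alpha>)" by simp
    then have "gdvd p \<alpha>" using p(1) g(1) unfolding gprime_def by blast
    then have "p \<in> gunits" using cop pg(2) gprime_gint[OF p(1)] unfolding gcoprime_def by blast
    then show False using p(1) unfolding gprime_def by blast
  qed
qed

theorem theorem4p14:
  fixes \<delta> :: int
  assumes "\<delta> \<in> {1, -1}"
  shows
  "(\<forall>\<alpha>\<in>gint. \<forall>\<beta>\<in>gint. \<forall>\<gamma>\<in>gint.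
      \<alpha>\<^sup>2 + (1 + of_int \<delta> * \<i>) * \<beta>\<^sup>2 + \<gamma>\<^sup>2 = 0 \<and> \<alpha> * \<beta> * \<gamma> \<noteq> 0 \<and> gcoprime \<alpha> \<beta> \<longrightarrow>
      (\<exists>u1\<in>gunits. \<exists>u2\<in>gunits. \<exists>u3\<in>gunits. \<exists>swap::bool. \<exists>X Y Z.
         (if swap then X = u1 * \<gamma> \<and> Y = u2 * \<beta> \<and> Z = u3 * \<alpha>
                  else X = u1 * \<alpha> \<and> Y = u2 * \<beta> \<and> Z = u3 * \<gamma>) \<and>
         X\<^sup>2 + (1 + of_int \<delta> * \<i>) * Y\<^sup>2 = Z\<^sup>2 \<and>
         X \<in> gOI \<and> Z \<in> gOI \<and>
         (\<exists>(a1::nat) (P::complex set) (e::complex \<Rightarrow> nat).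
            finite P \<and> P \<subseteq> {p. gprime p \<and> p \<in> gOI} \<and>
            Y = (1 + \<i>) ^ (2 + a1) * (\<Prod>p\<in>P. p ^ e p)) \<and>
         gcoprime X Y \<and> X * Y * Z \<noteq> 0))
   \<and>
   (\<forall>X\<in>gint. \<forall>Y\<in>gint. \<forall>Z\<in>gint.
      X\<^sup>2 + (1 + of_int \<delta> * \<i>) * Y\<^sup>2 = Z\<^sup>2 \<and> gcoprime X Y \<and> X * Y * Z \<noteq> 0 \<longrightarrow>
      X\<^sup>2 + (1 + of_int \<delta> * \<i>) * Y\<^sup>2 + (\<i> * Z)\<^sup>2 = 0 \<and> gcoprime X Y \<and> X * Y * (\<i> * Z) \<noteq> 0)"
proof -
  have dd: "\<delta> = 1 \<or> \<delta> = -1" using assms by auto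
  define k where "k = 1 + of_int \<delta> * \<i>"
  have kg: "k \<in> gint" unfolding k_def by simp
  have P1: "\<forall>\<alpha>\<in>gint. \<forall>\<beta>\<in>gint. \<forall>\<gamma>\<in>gint.
      \<alpha>\<^sup>2 + (1 + of_int \<delta> * \<i>) * \<beta>\<^sup>2 + \<gamma>\<^sup>2 = 0 \<and> \<alpha> * \<beta> * \<gamma> \<noteq> 0 \<and> gcoprime \<alpha> \<beta> \<longrightarrow>
      (\<exists>u1\<in>gunits. \<exists>u2\<in>gunits. \<exists>u3\<in>gunits. \<exists>swap::bool. \<exists>X Y Z.
         (if swap then X = u1 * \<gamma> \<and> Y = u2 * \<beta> \<and> Z = u3 * \<alpha>
                  else X = u1 * \<alpha> \<and> Y = u2 * \<beta> \<and> Z = u3 * \<gamma>) \<and>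
         X\<^sup>2 + (1 + of_int \<delta> * \<i>) * Y\<^sup>2 = Z\<^sup>2 \<and>
         X \<in> gOI \<and> Z \<in> gOI \<and>
         (\<exists>(a1::nat) (P::complex set) (e::complex \<Rightarrow> nat).
            finite P \<and> P \<subseteq> {p. gprime p \<and> p \<in> gOI} \<and>
            Y = (1 + \<i>) ^ (2 + a1) * (\<Prod>p\<in>P. p ^ e p)) \<and>
         gcoprime X Y \<and> X * Y * Z \<noteq> 0)"
  proof (intro ballI impI)
    fix \<alpha> \<beta> \<gamma> assume g: "\<alpha> \<in> gint" "\<beta> \<in> gint" "\<gamma> \<in> gint"
      and H: "\<alpha>\<^sup>2 + (1 + of_int \<delta> * \<i>) * \<beta>\<^sup>2 + \<gamma>\<^sup>2 = 0 \<and> \<alpha> * \<beta> * \<gamma> \<noteq> 0 \<and> gcoprime \<alpha> \<beta>"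
    have eq: "\<alpha>\<^sup>2 + k * \<beta>\<^sup>2 + \<gamma>\<^sup>2 = 0" and cop: "gcoprime \<alpha> \<beta>"
      and nz: "\<alpha> \<noteq> 0" "\<beta> \<noteq> 0" "\<gamma> \<noteq> 0" using H by (auto simp: k_def)
    obtain a b where ab: "\<alpha> = Complex (of_int a) (of_int b)" using gint_cases g(1) by blast
    obtain c d where cd: "\<beta> = Complex (of_int c) (of_int d)" using gint_cases g(2) by blast
    obtain e f where ef: "\<gamma> = Complex (of_int e) (of_int f)" using gint_cases g(3) by blast
    have key: "\<alpha>\<^sup>2 + k * \<beta>\<^sup>2 + \<gamma>\<^sup>2 = Complex (of_int (a^2 - b^2 + (c^2 - d^2) - 2*\<delta>*c*d + (e^2 - f^2)))
        (of_int (2*a*b + \<delta>*(c^2 - d^2) + 2*c*d + 2*e*f))"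
      unfolding ab cd ef k_def by (simp add: complex_eq_iff power2_eq_square algebra_simps)
    have "Complex (of_int (a^2 - b^2 + (c^2 - d^2) - 2*\<delta>*c*d + (e^2 - f^2)))
        (of_int (2*a*b + \<delta>*(c^2 - d^2) + 2*c*d + 2*e*f)) = 0" using key eq by simp
    then have RI: "a^2 - b^2 + (c^2 - d^2) - 2*\<delta>*c*d + (e^2 - f^2) = 0"
       "2*a*b + \<delta>*(c^2 - d^2) + 2*c*d + 2*e*f = 0"
      by (simp_all only: Complex_eq_0 of_int_eq_0_iff)
    have cop': "\<not> (even (a+b) \<and> even (c+d))"
    proof
      assume "even (a+b) \<and> even (c+d)"
      then have "gdvd (1+\<i>) \<alpha>" "gdvd (1+\<i>) \<beta>" unfolding ab cd by (simp_all add: dvd_1i_Complex)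
      then have "1 + \<i> \<in> gunits" using cop one_i_gint unfolding gcoprime_def by blast
      then show False using gunits_gn gn_1i by simp
    qed
    have par: "even c \<and> even d \<and> ((odd a \<and> even b \<and> even e \<and> odd f) \<or> (even a \<and> odd b \<and> odd e \<and> even f))"
      by (rule parity[OF dd RI cop'])
    define \<beta>' where "\<beta>' = Complex (of_int (c div 2)) (of_int (d div 2))"
    have b2: "\<beta> = 2 * \<beta>'" unfolding cd \<beta>'_def using par
      by (simp add: complex_eq_iff) (metis dvd_mult_div_cancel of_int_mult of_int_numeral)
    have b'g: "\<beta>' \<in> gint" "\<beta>' \<noteq> 0" using b2 nz(2) by (auto simp: \<beta>'_def)
    obtain kk w u where kw: "w \<in> gOI" "u \<in> gunits" "\<beta>' = u * (1 + \<i>) ^ kk * w"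
      using strip_1i[OF b'g] by blast
    have sq: "(1 + \<i>)^2 = 2 * \<i>" by (simp add: power2_eq_square algebra_simps)
    define \<epsilon> where "\<epsilon> = -\<i> * u"
    have mi: "-\<i> \<in> gunits" by (simp add: gunits_def)
    have epsu: "\<epsilon> \<in> gunits" unfolding \<epsilon>_def by (rule gunits_mult[OF mi kw(2)])
    have beps: "\<beta> = \<epsilon> * ((1 + \<i>) ^ (2 + kk) * w)"
      unfolding b2 kw(3) \<epsilon>_def power_add sq by (simp add: algebra_simps)
    obtain v where v: "v \<in> gunits" "\<epsilon> * v = 1" using gunits_inv epsu by blast
    have Yeq: "v * \<beta> = (1 + \<i>) ^ (2 + kk) * w"
      unfolding beps using v(2) by (simp add: algebra_simps)
    obtain PP ee where PP: "finite PP" "PP \<subseteq> {p. gprime p \<and> p \<in> gOI}" "w = (\<Prod>p\<in>PP. p ^ ee p)"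
      using factor_OI[OF kw(1)] by blast
    have Yform: "\<exists>(a1::nat) (P::complex set) (e::complex \<Rightarrow> nat).
            finite P \<and> P \<subseteq> {p. gprime p \<and> p \<in> gOI} \<and>
            v * \<beta> = (1 + \<i>) ^ (2 + a1) * (\<Prod>p\<in>P. p ^ e p)"
      using PP Yeq by blast
    have cls: "(RC \<alpha> \<and> IC \<gamma>) \<or> (IC \<alpha> \<and> RC \<gamma>)"
      using par ab ef unfolding RC_def IC_def by blast
    have cls2: "(RC (v*\<alpha>) \<and> IC (v*\<gamma>)) \<or> (IC (v*\<alpha>) \<and> RC (v*\<gamma>))"
      using cls unit_class[OF v(1)] by blast
    have vnz: "v \<noteq> 0" using gunits_nz v(1) by blast
    show "\<exists>u1\<in>gunits. \<exists>u2\<in>gunits. \<exists>u3\<in>gunits. \<exists>swap::bool. \<exists>X Y Z.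
         (if swap then X = u1 * \<gamma> \<and> Y = u2 * \<beta> \<and> Z = u3 * \<alpha>
                  else X = u1 * \<alpha> \<and> Y = u2 * \<beta> \<and> Z = u3 * \<gamma>) \<and>
         X\<^sup>2 + (1 + of_int \<delta> * \<i>) * Y\<^sup>2 = Z\<^sup>2 \<and>
         X \<in> gOI \<and> Z \<in> gOI \<and>
         (\<exists>(a1::nat) (P::complex set) (e::complex \<Rightarrow> nat).
            finite P \<and> P \<subseteq> {p. gprime p \<and> p \<in> gOI} \<and>
            Y = (1 + \<i>) ^ (2 + a1) * (\<Prod>p\<in>P. p ^ e p)) \<and>
         gcoprime X Y \<and> X * Y * Z \<noteq> 0"
    proof (cases "RC (v*\<alpha>) \<and> IC (v*\<gamma>)")
      case True
      obtain u1 where u1: "u1 \<in> gunits" "u1 * \<alpha> \<in> gOI" "u1^2 = v^2" using pick_R[OF v(1)] True by blast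
      obtain u3 where u3: "u3 \<in> gunits" "u3 * \<gamma> \<in> gOI" "u3^2 = -(v^2)" using pick_I[OF v(1)] True by blast
      have "(u1*\<alpha>)\<^sup>2 + k * (v*\<beta>)\<^sup>2 - (u3*\<gamma>)\<^sup>2 = v^2 * (\<alpha>\<^sup>2 + k * \<beta>\<^sup>2 + \<gamma>\<^sup>2)"
        by (simp add: power_mult_distrib u1(3) u3(3) algebra_simps)
      then have E: "(u1*\<alpha>)\<^sup>2 + k * (v*\<beta>)\<^sup>2 = (u3*\<gamma>)\<^sup>2" using eq by simp
      have C: "gcoprime (u1*\<alpha>) (v*\<beta>)" by (rule gcoprime_units[OF cop u1(1) v(1)])
      have N: "(u1*\<alpha>) * (v*\<beta>) * (u3*\<gamma>) \<noteq> 0" using nz vnz gunits_nz u1(1) u3(1) by auto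
      have "(if False then u1*\<alpha> = u1 * \<gamma> \<and> v*\<beta> = v * \<beta> \<and> u3*\<gamma> = u3 * \<alpha>
                  else u1*\<alpha> = u1 * \<alpha> \<and> v*\<beta> = v * \<beta> \<and> u3*\<gamma> = u3 * \<gamma>)" by simp
      then show ?thesis using u1 u3 v(1) E C N Yform unfolding k_def by blast
    next
      case False
      then have F: "IC (v*\<alpha>)" "RC (v*\<gamma>)" using cls2 by auto
      have cop2: "gcoprime \<gamma> \<beta>" by (rule gcoprime_swap[OF g nz(2) kg eq cop])
      obtain u1 where u1: "u1 \<in> gunits" "u1 * \<gamma> \<in> gOI" "u1^2 = v^2" using pick_R[OF v(1) F(2)] by blast
      obtain u3 where u3: "u3 \<in> gunits" "u3 * \<alpha> \<in> gOI" "u3^2 = -(v^2)" using pick_I[OF v(1) F(1)] by blast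
      have "(u1*\<gamma>)\<^sup>2 + k * (v*\<beta>)\<^sup>2 - (u3*\<alpha>)\<^sup>2 = v^2 * (\<alpha>\<^sup>2 + k * \<beta>\<^sup>2 + \<gamma>\<^sup>2)"
        by (simp add: power_mult_distrib u1(3) u3(3) algebra_simps)
      then have E: "(u1*\<gamma>)\<^sup>2 + k * (v*\<beta>)\<^sup>2 = (u3*\<alpha>)\<^sup>2" using eq by simp
      have C: "gcoprime (u1*\<gamma>) (v*\<beta>)" by (rule gcoprime_units[OF cop2 u1(1) v(1)])
      have N: "(u1*\<gamma>) * (v*\<beta>) * (u3*\<alpha>) \<noteq> 0" using nz vnz gunits_nz u1(1) u3(1) by auto
      have "(if True then u1*\<gamma> = u1 * \<gamma> \<and> v*\<beta> = v * \<beta> \<and> u3*\<alpha> = u3 * \<alpha>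
                  else u1*\<gamma> = u1 * \<alpha> \<and> v*\<beta> = v * \<beta> \<and> u3*\<alpha> = u3 * \<gamma>)" by simp
      then show ?thesis using u1 u3 v(1) E C N Yform unfolding k_def by blast
    qed
  qed
  have P2: "\<forall>X\<in>gint. \<forall>Y\<in>gint. \<forall>Z\<in>gint.
      X\<^sup>2 + (1 + of_int \<delta> * \<i>) * Y\<^sup>2 = Z\<^sup>2 \<and> gcoprime X Y \<and> X * Y * Z \<noteq> 0 \<longrightarrow>
      X\<^sup>2 + (1 + of_int \<delta> * \<i>) * Y\<^sup>2 + (\<i> * Z)\<^sup>2 = 0 \<and> gcoprime X Y \<and> X * Y * (\<i> * Z) \<noteq> 0"
  proof (intro ballI impI conjI)
    fix X Y Z assume H: "X\<^sup>2 + (1 + of_int \<delta> * \<i>) * Y\<^sup>2 = Z\<^sup>2 \<and> gcoprime X Y \<and> X * Y * Z \<noteq> 0"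
    have "(\<i> * Z)\<^sup>2 = - Z\<^sup>2" by (simp add: power_mult_distrib)
    then show "X\<^sup>2 + (1 + of_int \<delta> * \<i>) * Y\<^sup>2 + (\<i> * Z)\<^sup>2 = 0" using H by simp
    show "gcoprime X Y" using H by simp
    show "X * Y * (\<i> * Z) \<noteq> 0" using H by simp
  qed
  show ?thesis using P1 P2 by blast
qed

end
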